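(* Let $G$ be a looped simple graph and let $J$ be an independent set of some transverse matroid of $G$ (i.e. $J$ is a subtransversal of $W(G)$ independent in $M[IAS(G)]$). Then there is a looped simple graph $H$ locally equivalent to $G$ and an induced isomorphism $\beta:M[IAS(G)]\to M[IAS(H)]$ such that $\beta(J)\subseteq\Phi(H)=\{\phi_H(v):v\in V(H)\}$.
   Context: A looped simple graph is a finite graph in which each vertex carries at most one loop and no two distinct vertices are joined by more than one edge. "Adjacent"/"neighbors" refer only to distinct vertices joined by a non-loop edge; $N_G(v)$ is the set of neighbors of $v$. $A(G)$ is the $V(G)\times V(G)$ matrix over $GF(2)$ with diagonal entry $1$ exactly at looped vertices and off-diagonal entry $1$ exactly for adjacent pairs. $IAS(G)=(I\mid A(G)\mid A(G)+I)$ over $GF(2)$, rows indexed by $V(G)$; the $v$-columns of the three blocks are labelled $\phi_G(v),\chi_G(v),\psi_G(v)$. $M[IAS(G)]$ is the binary column matroid of $IAS(G)$ on $W(G)=\{\phi_G(v),\chi_G(v),\psi_G(v):v\in V(G)\}$. The vertex triple of $v$ is $\tau_G(v)=\{\phi_G(v),\chi_G(v),\psi_G(v)\}$. A subtransversal (transversal) meets each vertex triple in at most (exactly) one element; a transverse matroid of $G$ is the restriction of $M[IAS(G)]$ to a transversal. Local equivalence: $G_\ell^v$ complements the loop status of $v$; $G_s^v$ complements the adjacency status of every pair of distinct neighbors of $v$; $G_{ns}^v$ does this and also complements the loop status of every neighbor of $v$. $H$ is locally equivalent to $G$ if obtained from $G$ by a finite sequence of such operations. Induced isomorphisms: for each such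 operation producing $G'$ from $G$ there is a matroid isomorphism $M[IAS(G)]\to M[IAS(G')]$ sending $\alpha_G(x)\mapsto\alpha_{G'}(x)$ for all $\alpha\in\{\phi,\chi,\psi\}$, $x\in V(G)$, except: for $G'=G_\ell^v$, $\chi_G(v)\mapsto\psi_{G'}(v)$, $\psi_G(v)\mapsto\chi_{G'}(v)$; for $G'=G_{ns}^v$ with $v$ unlooped, $\phi_G(v)\mapsto\psi_{G'}(v)$, $\psi_G(v)\mapsto\phi_{G'}(v)$, and with $v$ looped, $\phi_G(v)\mapsto\chi_{G'}(v)$, $\chi_G(v)\mapsto\phi_{G'}(v)$; for $G'=G_s^v$, the same exchange at $v$ as for $G_{ns}^v$ and in addition, for every $w\in N_G(v)$, $\chi_G(w)\mapsto\psi_{G'}(w)$, $\psi_G(w)\mapsto\chi_{G'}(w)$. An induced isomorphism $M[IAS(G)]\to M[IAS(H)]$ is a composition of such isomorphisms along a sequence of operations transforming $G$ into $H$. *)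

theory Defs
  imports Main
begin

text \<open>A looped simple graph on a finite vertex set V is encoded by its adjacency
  matrix over GF(2), as a symmetric boolean function A supported on V x V:
  A v v = True iff v is looped; for v \<noteq> w, A v w = True iff v, w adjacent.\<close>

definition looped_simple :: "'a set \<Rightarrow> ('a \<Rightarrow> 'a \<Rightarrow> bool) \<Rightarrow> bool" where
  "looped_simple V A \<longleftrightarrow> finite V \<and> (\<forall>x y. A x y = A y x)
     \<and> (\<forall>x y. A x y \<longrightarrow> x \<in> V \<and> y \<in> V)"

definition nbrs :: "'a set \<Rightarrow> ('a \<Rightarrow> 'a \<Rightarrow> bool) \<Rightarrow> 'a \<Rightarrow> 'a set" where
  "nbrs V A v = {w \<in> V. w \<noteq> v \<and> A v w}"

datatype kind = Phi | Chi | Psi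

text \<open>Elements of W(G): (Phi,v) = phi_G(v), (Chi,v) = chi_G(v), (Psi,v) = psi_G(v).\<close>

definition W :: "'a set \<Rightarrow> (kind \<times> 'a) set" where
  "W V = UNIV \<times> V"

text \<open>Column of IAS(G) labelled by an element, as a vector over GF(2) indexed by V.\<close>
fun col :: "('a \<Rightarrow> 'a \<Rightarrow> bool) \<Rightarrow> kind \<times> 'a \<Rightarrow> 'a \<Rightarrow> bool" where
  "col A (Phi, v) x = (x = v)"
| "col A (Chi, v) x = A x v"
| "col A (Psi, v) x = (A x v \<noteq> (x = v))"

text \<open>Independence in the binary column matroid M[IAS(G)]: no nonempty subset of
  the columns sums to zero over GF(2).\<close>
definition indep_IAS :: "'a set \<Rightarrow> ('a \<Rightarrow> 'a \<Rightarrow> bool) \<Rightarrow> (kind \<times> 'a) set \<Rightarrow> bool" where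
  "indep_IAS V A S \<longleftrightarrow> S \<subseteq> W V \<and>
     (\<forall>T \<subseteq> S. T \<noteq> {} \<longrightarrow> (\<exists>x \<in> V. odd (card {e \<in> T. col A e x})))"

definition subtransversal :: "'a set \<Rightarrow> (kind \<times> 'a) set \<Rightarrow> bool" where
  "subtransversal V S \<longleftrightarrow> S \<subseteq> W V \<and> (\<forall>v \<in> V. card {e \<in> S. snd e = v} \<le> 1)"

definition Phis :: "'a set \<Rightarrow> (kind \<times> 'a) set" where
  "Phis V = {(Phi, v) | v. v \<in> V}"

definition loop_op :: "'a \<Rightarrow> ('a \<Rightarrow> 'a \<Rightarrow> bool) \<Rightarrow> ('a \<Rightarrow> 'a \<Rightarrow> bool)" where
  "loop_op v A = (\<lambda>x y. if x = v \<and> y = v then \<not> A x y else A x y)"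

definition s_op :: "'a set \<Rightarrow> 'a \<Rightarrow> ('a \<Rightarrow> 'a \<Rightarrow> bool) \<Rightarrow> ('a \<Rightarrow> 'a \<Rightarrow> bool)" where
  "s_op V v A = (\<lambda>x y. if x \<noteq> y \<and> x \<in> nbrs V A v \<and> y \<in> nbrs V A v then \<not> A x y else A x y)"

definition ns_op :: "'a set \<Rightarrow> 'a \<Rightarrow> ('a \<Rightarrow> 'a \<Rightarrow> bool) \<Rightarrow> ('a \<Rightarrow> 'a \<Rightarrow> bool)" where
  "ns_op V v A = (\<lambda>x y. if x \<in> nbrs V A v \<and> y \<in> nbrs V A v then \<not> A x y else A x y)"

definition swapk :: "kind \<Rightarrow> kind \<Rightarrow> kind \<Rightarrow> kind" where
  "swapk a b k = (if k = a then b else if k = b then a else k)"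

text \<open>Element maps of the isomorphisms induced by the operations (computed in the
  graph before the operation).\<close>
definition loop_map :: "'a \<Rightarrow> kind \<times> 'a \<Rightarrow> kind \<times> 'a" where
  "loop_map v e = (if snd e = v then (swapk Chi Psi (fst e), snd e) else e)"

definition ns_map :: "('a \<Rightarrow> 'a \<Rightarrow> bool) \<Rightarrow> 'a \<Rightarrow> kind \<times> 'a \<Rightarrow> kind \<times> 'a" where
  "ns_map A v e = (if snd e = v then
       (if A v v then (swapk Phi Chi (fst e), snd e) else (swapk Phi Psi (fst e), snd e))
     else e)"

definition s_map :: "'a set \<Rightarrow> ('a \<Rightarrow> 'a \<Rightarrow> bool) \<Rightarrow> 'a \<Rightarrow> kind \<times> 'a \<Rightarrow> kind \<times> 'a" where
  "s_map V A v e = (if snd e = v then ns_map A v e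
     else if snd e \<in> nbrs V A v then (swapk Chi Psi (fst e), snd e) else e)"

inductive induced_iso :: "'a set \<Rightarrow> ('a \<Rightarrow> 'a \<Rightarrow> bool) \<Rightarrow> ('a \<Rightarrow> 'a \<Rightarrow> bool)
    \<Rightarrow> (kind \<times> 'a \<Rightarrow> kind \<times> 'a) \<Rightarrow> bool" for V A where
  refl: "induced_iso V A A id"
| loop: "induced_iso V A B \<beta> \<Longrightarrow> v \<in> V \<Longrightarrow> induced_iso V A (loop_op v B) (loop_map v \<circ> \<beta>)"
| s: "induced_iso V A B \<beta> \<Longrightarrow> v \<in> V \<Longrightarrow> induced_iso V A (s_op V v B) (s_map V B v \<circ> \<beta>)"
| ns: "induced_iso V A B \<beta> \<Longrightarrow> v \<in> V \<Longrightarrow> induced_iso V A (ns_op V v B) (ns_map B v \<circ> \<beta>)"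

end

theory Submission
  imports Defs
begin

lemma kind_UNIV: "(UNIV::kind set) = {Phi,Chi,Psi}"
  using kind.exhaust by auto

lemma finite_W: "finite V \<Longrightarrow> finite (W V)"
  unfolding W_def by (rule finite_cartesian_product) (simp_all add: kind_UNIV)

lemma par_xor:
  assumes "finite T"
  shows "odd (card {e\<in>T. p e \<noteq> q e}) = (odd (card {e\<in>T. p e}) \<noteq> odd (card {e\<in>T. q e}))"
  using assms
proof (induction T rule: finite_induct)
  case empty then show ?case by simp
next
  case (insert a T)
  have f: "\<And>P. finite {e\<in>T. P e}" using insert(1) by simp
  have eq: "\<And>P. {e\<in>insert a T. P e} = (if P a then insert a {e\<in>T. P e} else {e\<in>T. P e})" by auto
  have c: "\<And>P. card {e\<in>insert a T. P e} = (if P a then Suc (card {e\<in>T. P e}) else card {e\<in>T. P e})"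
    using eq insert(2) f by simp
  show ?case using insert(3) unfolding c by auto
qed

lemma ls_sym: "looped_simple V B \<Longrightarrow> B x y = B y x" by (simp add: looped_simple_def)
lemma ls_supp: "looped_simple V B \<Longrightarrow> B x y \<Longrightarrow> x \<in> V \<and> y \<in> V" unfolding looped_simple_def by blast

lemma ns_ls: "looped_simple V B \<Longrightarrow> looped_simple V (ns_op V v B)"
  unfolding looped_simple_def ns_op_def nbrs_def by auto

lemma col_ns:
  assumes ls: "looped_simple V B" and v: "v \<in> V"
  shows "col (ns_op V v B) (ns_map B v e) x = (col B e x \<noteq> (x \<in> nbrs V B v \<and> col B e v))"
proof -
  obtain k y where e: "e = (k,y)" by (cases e)
  have sym: "\<And>x y. B x y = B y x" using ls by (simp add: looped_simple_def)
  have supp: "\<And>x y. B x y \<Longrightarrow> x \<in> V \<and> y \<in> V" using ls unfolding looped_simple_def by blast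
  have supp2: "\<And>x y. B x y \<Longrightarrow> y \<in> V" using supp by blast
  have supp1: "\<And>x y. B x y \<Longrightarrow> x \<in> V" using supp by blast
  show ?thesis
    unfolding e
    by (cases k; cases "y = v"; cases "B v v")
       (auto simp: ns_map_def swapk_def ns_op_def nbrs_def dest: supp1 supp2 intro: sym[THEN iffD1])
qed

lemma ns_map_invol: "ns_map B v (ns_map B v e) = e"
  by (cases e) (auto simp: ns_map_def swapk_def split: if_splits)

lemma ns_map_inj: "inj (ns_map B v)"
  by (metis injI ns_map_invol)

lemma ns_map_snd: "snd (ns_map B v e) = snd e"
  by (auto simp: ns_map_def)

lemma ns_map_other: "snd e \<noteq> v \<Longrightarrow> ns_map B v e = e"
  by (auto simp: ns_map_def)

lemma card_img_filter:
  assumes "inj f"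
  shows "card {e'\<in>f ` T. P e'} = card {e\<in>T. P (f e)}"
proof -
  have "{e'\<in>f ` T. P e'} = f ` {e\<in>T. P (f e)}" by auto
  then show ?thesis using card_image[OF inj_on_subset[OF assms]] by simp
qed

lemma ns_indep:
  assumes ls: "looped_simple V B" and v: "v \<in> V" and ind: "indep_IAS V B S"
  shows "indep_IAS V (ns_op V v B) (ns_map B v ` S)"
proof -
  let ?m = "ns_map B v"
  let ?N = "nbrs V B v"
  have SW: "S \<subseteq> W V" using ind by (simp add: indep_IAS_def)
  have finS: "finite S" using SW finite_W ls by (auto simp: looped_simple_def intro: finite_subset)
  have "?m ` S \<subseteq> W V" using SW by (auto simp: W_def ns_map_def)
  moreover have "\<exists>x\<in>V. odd (card {e \<in> T'. col (ns_op V v B) e x})"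
    if T': "T' \<subseteq> ?m ` S" "T' \<noteq> {}" for T'
  proof (rule ccontr)
    assume no: "\<not> ?thesis"
    define T where "T = {e\<in>S. ?m e \<in> T'}"
    have TT: "T' = ?m ` T" using T' unfolding T_def by auto
    have "T \<subseteq> S" "T \<noteq> {}" using T' unfolding T_def by auto
    then obtain x0 where x0: "x0 \<in> V" "odd (card {e\<in>T. col B e x0})"
      using ind unfolding indep_IAS_def by blast
    have finT: "finite T" using \<open>T \<subseteq> S\<close> finS finite_subset by blast
    have key: "odd (card {e \<in> T'. col (ns_op V v B) e x}) =
        (odd (card {e\<in>T. col B e x}) \<noteq> (x \<in> ?N \<and> odd (card {e\<in>T. col B e v})))" for x
    proof -
      have "card {e \<in> T'. col (ns_op V v B) e x} = card {e\<in>T. col (ns_op V v B) (?m e) x}"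
        unfolding TT by (rule card_img_filter[OF ns_map_inj])
      also have "\<dots> = card {e\<in>T. col B e x \<noteq> (x \<in> ?N \<and> col B e v)}"
        using col_ns[OF ls v] by simp
      finally have c: "card {e \<in> T'. col (ns_op V v B) e x} = card {e\<in>T. col B e x \<noteq> (x \<in> ?N \<and> col B e v)}" .
      show ?thesis
      proof (cases "x \<in> ?N")
        case True then show ?thesis unfolding c using par_xor[OF finT] by simp
      next
        case False then show ?thesis unfolding c by simp
      qed
    qed
    have vN: "v \<notin> ?N" by (simp add: nbrs_def)
    have ev: "\<not> odd (card {e\<in>T. col B e v})" using no key[of v] vN v by auto
    have "\<not> odd (card {e\<in>T. col B e x0})" using no key[of x0] ev x0(1) by auto
    then show False using x0 by simp
  qed
  ultimately show ?thesis unfolding indep_IAS_def by blast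
qed

lemma ns_subtr:
  assumes "subtransversal V S"
  shows "subtransversal V (ns_map B v ` S)"
proof -
  have SW: "S \<subseteq> W V" using assms by (simp add: subtransversal_def)
  have "ns_map B v ` S \<subseteq> W V" using SW by (auto simp: W_def ns_map_def)
  moreover have "card {e \<in> ns_map B v ` S. snd e = u} \<le> 1" if "u \<in> V" for u
  proof -
    have "card {e \<in> ns_map B v ` S. snd e = u} = card {e\<in>S. snd (ns_map B v e) = u}"
      by (rule card_img_filter[OF ns_map_inj])
    also have "\<dots> = card {e\<in>S. snd e = u}" by (simp add: ns_map_snd)
    finally show ?thesis using assms that by (simp add: subtransversal_def)
  qed
  ultimately show ?thesis by (simp add: subtransversal_def)
qed

definition mu :: "(kind \<times> 'a) set \<Rightarrow> nat" where
  "mu S = card {e\<in>S. fst e \<noteq> Phi}"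

lemma subtr_uniq:
  assumes st: "subtransversal V S" and fin: "finite V" and "e \<in> S" "x \<in> S" "snd e = snd x"
  shows "e = x"
proof -
  have SW: "S \<subseteq> W V" using st by (simp add: subtransversal_def)
  have u: "snd x \<in> V" using SW assms(4) by (auto simp: W_def)
  have finS: "finite S" using SW finite_W fin finite_subset by blast
  have "card {e\<in>S. snd e = snd x} \<le> Suc 0" using st u by (simp add: subtransversal_def)
  moreover have "finite {e\<in>S. snd e = snd x}" using finS by simp
  ultimately show ?thesis using assms card_le_Suc0_iff_eq by blast
qed

lemma case1:
  assumes st: "subtransversal V S" and fin: "finite V" and x: "x \<in> S" "fst x \<noteq> Phi"
    and c: "col B x (snd x)"
  shows "mu (ns_map B (snd x) ` S) < mu S"
proof -
  let ?v = "snd x"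
  let ?m = "ns_map B ?v"
  have SW: "S \<subseteq> W V" using st by (simp add: subtransversal_def)
  have finS: "finite S" using SW finite_W fin finite_subset by blast
  obtain k u where xk: "x = (k, u)" by (cases x) auto
  have mx: "?m x = (Phi, ?v)"
    using c x(2) unfolding xk by (cases k) (auto simp: ns_map_def swapk_def)
  have sub: "{e\<in>?m ` S. fst e \<noteq> Phi} \<subseteq> ?m ` ({e\<in>S. fst e \<noteq> Phi} - {x})"
  proof
    fix e' assume "e' \<in> {e\<in>?m ` S. fst e \<noteq> Phi}"
    then obtain e where e: "e \<in> S" "e' = ?m e" "fst (?m e) \<noteq> Phi" by auto
    have "e \<noteq> x" using e mx by auto
    then have "snd e \<noteq> ?v" using subtr_uniq[OF st fin e(1) x(1)] by blast
    then have "?m e = e" by (rule ns_map_other)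
    then show "e' \<in> ?m ` ({e\<in>S. fst e \<noteq> Phi} - {x})" using e \<open>e \<noteq> x\<close> by force
  qed
  have "mu (?m ` S) \<le> card (?m ` ({e\<in>S. fst e \<noteq> Phi} - {x}))"
    unfolding mu_def using sub finS by (intro card_mono) auto
  also have "\<dots> \<le> card ({e\<in>S. fst e \<noteq> Phi} - {x})" using finS by (intro card_image_le) auto
  also have "\<dots> < card {e\<in>S. fst e \<noteq> Phi}" using finS x by (intro card_Diff1_less) auto
  finally show ?thesis unfolding mu_def .
qed

lemma mono:
  assumes fin: "finite S" and w: "(Phi, w) \<notin> S"
  shows "mu (ns_map B w ` S) \<le> mu S"
proof -
  let ?m = "ns_map B w"
  have sub: "{e\<in>?m ` S. fst e \<noteq> Phi} \<subseteq> ?m ` {e\<in>S. fst e \<noteq> Phi}"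
  proof
    fix e' assume "e' \<in> {e\<in>?m ` S. fst e \<noteq> Phi}"
    then obtain e where e: "e \<in> S" "e' = ?m e" "fst (?m e) \<noteq> Phi" by auto
    have "fst e \<noteq> Phi"
    proof
      assume p: "fst e = Phi"
      then have "snd e \<noteq> w" using w e(1) by (cases e) auto
      then have "?m e = e" by (rule ns_map_other)
      then show False using p e(3) by simp
    qed
    then show "e' \<in> ?m ` {e\<in>S. fst e \<noteq> Phi}" using e by auto
  qed
  have "mu (?m ` S) \<le> card (?m ` {e\<in>S. fst e \<noteq> Phi})"
    unfolding mu_def using sub fin by (intro card_mono) auto
  also have "\<dots> \<le> card {e\<in>S. fst e \<noteq> Phi}" using fin by (intro card_image_le) auto
  finally show ?thesis unfolding mu_def .
qed

lemma exists_w: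
  assumes ls: "looped_simple V B" and ind: "indep_IAS V B S" and x: "x \<in> S" "fst x \<noteq> Phi"
    and c: "\<not> col B x (snd x)"
  shows "\<exists>w\<in>nbrs V B (snd x). (Phi, w) \<notin> S"
proof (rule ccontr)
  assume "\<not> ?thesis"
  then have all: "\<And>w. w \<in> nbrs V B (snd x) \<Longrightarrow> (Phi, w) \<in> S" by blast
  let ?v = "snd x"
  let ?N = "nbrs V B ?v"
  define T where "T = insert x ((\<lambda>w. (Phi, w)) ` ?N)"
  have "T \<subseteq> S" "T \<noteq> {}" using all x unfolding T_def by auto
  then obtain y where y: "y \<in> V" "odd (card {e\<in>T. col B e y})"
    using ind unfolding indep_IAS_def by blast
  obtain k u where xk: "x = (k, u)" by (cases x) auto
  have sym: "\<And>x y. B x y = B y x" using ls by (simp add: looped_simple_def)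
  have colx: "col B x y = (y \<in> ?N)"
  proof (cases "y = ?v")
    case True then show ?thesis using c by (simp add: nbrs_def)
  next
    case False then show ?thesis using x(2) y(1) sym unfolding xk
      by (cases k) (auto simp: nbrs_def)
  qed
  have eq: "{e\<in>T. col B e y} = (if y \<in> ?N then {x, (Phi, y)} else {})"
    unfolding T_def using colx by auto
  have "x \<noteq> (Phi, y)" using x(2) by auto
  then have "\<not> odd (card {e\<in>T. col B e y})" unfolding eq by auto
  then show False using y by simp
qed

lemma flip:
  assumes ls: "looped_simple V B" and v: "v \<in> nbrs V B w" and k: "k \<noteq> Phi"
  shows "col (ns_op V w B) (k, v) v = (\<not> col B (k, v) v)"
  using v k by (cases k) (auto simp: ns_op_def)

lemma main:
  assumes ls: "looped_simple V A"
  shows "\<forall>B \<beta>. induced_iso V A B \<beta> \<longrightarrow> looped_simple V B \<longrightarrow> subtransversal V (\<beta> ` J)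
     \<longrightarrow> indep_IAS V B (\<beta> ` J) \<longrightarrow> mu (\<beta> ` J) = n
     \<longrightarrow> (\<exists>C \<gamma>. induced_iso V A C \<gamma> \<and> \<gamma> ` J \<subseteq> Phis V)"
proof (induction n rule: less_induct)
  case (less n)
  have fin: "finite V" using ls by (simp add: looped_simple_def)
  show ?case
  proof (intro allI impI)
    fix B \<beta> assume ii: "induced_iso V A B \<beta>" and lsB: "looped_simple V B"
      and stB: "subtransversal V (\<beta> ` J)" and indB: "indep_IAS V B (\<beta> ` J)"
      and mun: "mu (\<beta> ` J) = n"
    let ?S = "\<beta> ` J"
    have SW: "?S \<subseteq> W V" using stB by (simp add: subtransversal_def)
    have finS: "finite ?S" using SW finite_W fin finite_subset by blast
    have IH: "\<And>B' \<beta>'. induced_iso V A B' \<beta>' \<Longrightarrow> looped_simple V B' \<Longrightarrow> subtransversal V (\<beta>' ` J)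
       \<Longrightarrow> indep_IAS V B' (\<beta>' ` J) \<Longrightarrow> mu (\<beta>' ` J) < n
       \<Longrightarrow> (\<exists>C \<gamma>. induced_iso V A C \<gamma> \<and> \<gamma> ` J \<subseteq> Phis V)"
      using less by blast
    show "\<exists>C \<gamma>. induced_iso V A C \<gamma> \<and> \<gamma> ` J \<subseteq> Phis V"
    proof (cases "mu ?S = 0")
      case True
      then have "{e\<in>?S. fst e \<noteq> Phi} = {}" using finS unfolding mu_def by simp
      then have "?S \<subseteq> Phis V" using SW unfolding Phis_def W_def by force
      then show ?thesis using ii by blast
    next
      case False
      then have "{e\<in>?S. fst e \<noteq> Phi} \<noteq> {}" unfolding mu_def by (metis card.empty)
      then obtain x where x: "x \<in> ?S" "fst x \<noteq> Phi" by blast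
      let ?v = "snd x"
      have v: "?v \<in> V" using x SW by (auto simp: W_def)
      show ?thesis
      proof (cases "col B x ?v")
        case True
        have ii2: "induced_iso V A (ns_op V ?v B) (ns_map B ?v \<circ> \<beta>)"
          by (rule induced_iso.ns[OF ii v])
        have im: "(ns_map B ?v \<circ> \<beta>) ` J = ns_map B ?v ` ?S" by (simp add: image_comp)
        show ?thesis
          apply (rule IH[OF ii2 ns_ls[OF lsB]])
          unfolding im
            apply (rule ns_subtr[OF stB])
           apply (rule ns_indep[OF lsB v indB])
          using case1[OF stB fin x True] mun by simp
      next
        case False
        obtain w where w: "w \<in> nbrs V B ?v" "(Phi, w) \<notin> ?S"
          using exists_w[OF lsB indB x False] by blast
        have wV: "w \<in> V" using w by (simp add: nbrs_def)
        have vw: "?v \<in> nbrs V B w" using w v lsB by (auto simp: nbrs_def looped_simple_def)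
        let ?B1 = "ns_op V w B"
        let ?S1 = "ns_map B w ` ?S"
        have ii1: "induced_iso V A ?B1 (ns_map B w \<circ> \<beta>)"
          by (rule induced_iso.ns[OF ii wV])
        have ls1: "looped_simple V ?B1" by (rule ns_ls[OF lsB])
        have st1: "subtransversal V ?S1" by (rule ns_subtr[OF stB])
        have ind1: "indep_IAS V ?B1 ?S1" by (rule ns_indep[OF lsB wV indB])
        have mu1: "mu ?S1 \<le> mu ?S" by (rule mono[OF finS w(2)])
        have "?v \<noteq> w" using w by (auto simp: nbrs_def)
        then have mx: "ns_map B w x = x" by (simp add: ns_map_other)
        have x1: "x \<in> ?S1" using x(1) mx by force
        have "col ?B1 (fst x, ?v) ?v = (\<not> col B (fst x, ?v) ?v)"
          by (rule flip[OF lsB vw x(2)])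
        then have c1: "col ?B1 x ?v" using False by simp
        have ii2: "induced_iso V A (ns_op V ?v ?B1) (ns_map ?B1 ?v \<circ> (ns_map B w \<circ> \<beta>))"
          by (rule induced_iso.ns[OF ii1 v])
        have im: "(ns_map ?B1 ?v \<circ> (ns_map B w \<circ> \<beta>)) ` J = ns_map ?B1 ?v ` ?S1"
          by (simp add: image_comp)
        show ?thesis
          apply (rule IH[OF ii2 ns_ls[OF ls1]])
          unfolding im
            apply (rule ns_subtr[OF st1])
           apply (rule ns_indep[OF ls1 v ind1])
          using case1[OF st1 fin x1 x(2) c1] mu1 mun by simp
      qed
    qed
  qed
qed

theorem proposition4p1:
  fixes V :: "'a set" and A :: "'a \<Rightarrow> 'a \<Rightarrow> bool" and J :: "(kind \<times> 'a) set"
  assumes "looped_simple V A"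
    and "subtransversal V J"
    and "indep_IAS V A J"
  shows "\<exists>B \<beta>. induced_iso V A B \<beta> \<and> \<beta> ` J \<subseteq> Phis V"
  using main[OF assms(1), of J "mu J"] assms induced_iso.refl[of V A] by simp

end
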